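(* Let $\delta>0$ and let $g:[\ell,r]\to\mathbb{R}$ be a function with $|g(x)+\frac12x^2|\leq\frac14\delta^2$ for all $x\in[\ell,r]$. Let $x_0\in[\ell+3\delta,r-3\delta]$. Let $h_1$ be the concave majorant of $g$ on $[\ell,r]$ and $h_2$ the concave majorant of $g$ on $[x_0-3\delta,x_0+3\delta]$. Then $h_1(x_0)=h_2(x_0)$.
   Context: The concave majorant of $g$ on an interval $I$ is $h(x_0)=\inf\{ax_0+b: ax+b\geq g(x)\text{ for all }x\in I\}$ for $x_0\in I$. *)

theory Defs
  imports "HOL-Analysis.Analysis"
begin

definition concave_majorant :: "(real \<Rightarrow> real) \<Rightarrow> real set \<Rightarrow> real \<Rightarrow> real" where
  "concave_majorant g I x0 = Inf {a * x0 + b | a b. \<forall>x\<in>I. a * x + b \<ge> g x}"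

end

theory Submission
  imports Defs
begin

lemma right_aux:
  fixes \<alpha> \<beta> \<delta> t c :: real
  assumes d: "\<delta> > 0" and c: "c = \<delta>\<^sup>2 / 4" and b: "\<beta> < c"
    and h3: "\<beta> + \<alpha> * (3*\<delta>) + (3*\<delta>)\<^sup>2/2 \<ge> -c"
    and h2: "\<beta> + \<alpha> * (2*\<delta>) + (2*\<delta>)\<^sup>2/2 \<ge> -c"
    and t: "t \<ge> 3*\<delta>"
  shows "\<beta> + \<alpha> * t + t\<^sup>2/2 \<ge> c"
proof -
  have "\<delta> * (3*\<alpha> + 5*\<delta>) > 0" using h3 b c by (simp add: algebra_simps power2_eq_square)
  hence "3*\<alpha> + 5*\<delta> > 0" using d by (simp add: zero_less_mult_iff)
  hence a0: "\<alpha> + 2*\<delta> \<ge> 0" using d by linarith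
  have "\<alpha> + (t+2*\<delta>)/2 - (t - 2*\<delta>)/2 = \<alpha> + 2*\<delta>" by (simp add: diff_divide_distrib[symmetric])
  hence a: "\<alpha> + (t+2*\<delta>)/2 \<ge> (t - 2*\<delta>)/2" using a0 by linarith
  have "(t-2*\<delta>)*(\<alpha> + (t+2*\<delta>)/2) \<ge> \<delta> * (\<delta>/2)"
    by (rule mult_mono) (use a t d in auto)
  moreover have "(\<beta> + \<alpha> * t + t\<^sup>2/2) - (\<beta> + \<alpha> * (2*\<delta>) + (2*\<delta>)\<^sup>2/2)
      = (t-2*\<delta>)*(\<alpha> + (t+2*\<delta>)/2)" by (simp add: field_simps power2_eq_square)
  ultimately show ?thesis using h2 c by (simp add: power2_eq_square)
qed

lemma ident:
  fixes a b y x0 :: real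
  shows "a*y + b + y\<^sup>2/2 = (a*x0+b+x0\<^sup>2/2) + (a+x0)*(y-x0) + (y-x0)\<^sup>2/2"
  by (simp add: field_simps power2_eq_square)

theorem mainTheorem15:
  fixes g :: "real \<Rightarrow> real" and l r \<delta> x0 :: real
  assumes "\<delta> > 0"
    and "\<And>x. x \<in> {l..r} \<Longrightarrow> \<bar>g x + x\<^sup>2 / 2\<bar> \<le> \<delta>\<^sup>2 / 4"
    and "x0 \<in> {l + 3 * \<delta> .. r - 3 * \<delta>}"
  shows "concave_majorant g {l..r} x0 = concave_majorant g {x0 - 3 * \<delta> .. x0 + 3 * \<delta>} x0"
proof -
  note d = assms(1) and gb = assms(2)
  define c where "c = \<delta>\<^sup>2 / 4"
  have JI: "{x0 - 3 * \<delta> .. x0 + 3 * \<delta>} \<subseteq> {l..r}" using assms(3) by auto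
  have up: "g x \<le> c - x\<^sup>2/2" and lo: "g x \<ge> -c - x\<^sup>2/2" if "x \<in> {l..r}" for x
  proof -
    have "\<bar>g x + x\<^sup>2 / 2\<bar> \<le> c" using gb[OF that] unfolding c_def .
    then have "g x + x\<^sup>2 / 2 \<le> c" "-(g x + x\<^sup>2 / 2) \<le> c"
      using abs_le_D1 abs_le_D2 by blast+
    then show "g x \<le> c - x\<^sup>2/2" "g x \<ge> -c - x\<^sup>2/2" by linarith+
  qed
  have key: "\<exists>a' b'. a' * x0 + b' = a * x0 + b \<and> (\<forall>x\<in>{l..r}. a' * x + b' \<ge> g x)"
    if H: "\<forall>x\<in>{x0 - 3 * \<delta> .. x0 + 3 * \<delta>}. a * x + b \<ge> g x" for a b
  proof -
    define \<beta> where "\<beta> = a*x0+b+x0\<^sup>2/2"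
    define \<alpha> where "\<alpha> = a + x0"
    show ?thesis
    proof (cases "\<beta> \<ge> c")
      case True
      show ?thesis
      proof (intro exI conjI ballI)
        show "(-x0) * x0 + (\<beta> + x0\<^sup>2/2) = a * x0 + b" unfolding \<beta>_def by (simp add: power2_eq_square)
        fix x assume x: "x \<in> {l..r}"
        have "0 \<le> (x-x0)\<^sup>2/2" by simp
        also have "(x-x0)\<^sup>2/2 = x\<^sup>2/2 - x0*x + x0\<^sup>2/2" by (simp add: field_simps power2_eq_square)
        finally show "(-x0) * x + (\<beta> + x0\<^sup>2/2) \<ge> g x" using up[OF x] True by simp
      qed
    next
      case False
      hence b: "\<beta> < c" by simp
      have P: "\<beta> + \<alpha>*(y-x0) + (y-x0)\<^sup>2/2 \<ge> -c" if "y \<in> {x0 - 3 * \<delta> .. x0 + 3 * \<delta>}" for y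
      proof -
        have "a*y+b \<ge> g y" using H that by auto
        moreover have "y \<in> {l..r}" using JI that by blast
        hence "g y \<ge> -c - y\<^sup>2/2" by (rule lo)
        ultimately show ?thesis using ident[of a y b x0] unfolding \<alpha>_def \<beta>_def by linarith
      qed
      have Q: "\<beta> + \<alpha>*u + u\<^sup>2/2 \<ge> -c" if "-3*\<delta> \<le> u" "u \<le> 3*\<delta>" for u
      proof -
        have "x0 + u \<in> {x0 - 3 * \<delta> .. x0 + 3 * \<delta>}" using that by simp
        from P[OF this] show ?thesis by simp
      qed
      have p3: "\<beta> + \<alpha>*(3*\<delta>) + (3*\<delta>)\<^sup>2/2 \<ge> -c" by (rule Q) (use d in auto)
      have p2: "\<beta> + \<alpha>*(2*\<delta>) + (2*\<delta>)\<^sup>2/2 \<ge> -c" by (rule Q) (use d in auto)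
      have "\<beta> + \<alpha>*(-(3*\<delta>)) + (-(3*\<delta>))\<^sup>2/2 \<ge> -c" by (rule Q) (use d in auto)
      hence m3: "\<beta> + (-\<alpha>)*(3*\<delta>) + (3*\<delta>)\<^sup>2/2 \<ge> -c" by (simp only: power2_minus mult_minus_right mult_minus_left)
      have "\<beta> + \<alpha>*(-(2*\<delta>)) + (-(2*\<delta>))\<^sup>2/2 \<ge> -c" by (rule Q) (use d in auto)
      hence m2: "\<beta> + (-\<alpha>)*(2*\<delta>) + (2*\<delta>)\<^sup>2/2 \<ge> -c" by (simp only: power2_minus mult_minus_right mult_minus_left)
      show ?thesis
      proof (intro exI conjI ballI)
        show "a * x0 + b = a * x0 + b" ..
        fix x assume x: "x \<in> {l..r}"
        show "a * x + b \<ge> g x"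
        proof (cases "x \<in> {x0 - 3 * \<delta> .. x0 + 3 * \<delta>}")
          case True then show ?thesis using H by auto
        next
          case False
          have "\<beta> + \<alpha>*(x-x0) + (x-x0)\<^sup>2/2 \<ge> c"
          proof (cases "x > x0 + 3*\<delta>")
            case True
            show ?thesis by (rule right_aux[OF d c_def b p3 p2]) (use True in auto)
          next
            case F2: False
            hence "x < x0 - 3*\<delta>" using False by auto
            have "\<beta> + (-\<alpha>)*(x0-x) + (x0-x)\<^sup>2/2 \<ge> c"
              by (rule right_aux[OF d c_def b m3 m2]) (use \<open>x < x0 - 3*\<delta>\<close> in auto)
            moreover have "(x0-x)\<^sup>2 = (x-x0)\<^sup>2" by (simp add: power2_commute)
            moreover have "-\<alpha> * (x0-x) = \<alpha>*(x-x0)" by (simp add: algebra_simps)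
            ultimately show ?thesis by linarith
          qed
          thus ?thesis using ident[of a x b x0] up[OF x] unfolding \<alpha>_def \<beta>_def by linarith
        qed
      qed
    qed
  qed
  have "{a * x0 + b | a b. \<forall>x\<in>{l..r}. a * x + b \<ge> g x}
      = {a * x0 + b | a b. \<forall>x\<in>{x0 - 3 * \<delta> .. x0 + 3 * \<delta>}. a * x + b \<ge> g x}"
    (is "?A = ?B")
  proof
    show "?A \<subseteq> ?B"
    proof
      fix v assume "v \<in> ?A"
      then obtain a b where v: "v = a * x0 + b" and H: "\<forall>x\<in>{l..r}. a * x + b \<ge> g x"
        by blast
      have "\<forall>x\<in>{x0 - 3 * \<delta> .. x0 + 3 * \<delta>}. a * x + b \<ge> g x"
      proof
        fix x assume "x \<in> {x0 - 3 * \<delta> .. x0 + 3 * \<delta>}"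
        hence "x \<in> {l..r}" using JI by (rule subsetD[rotated])
        thus "a * x + b \<ge> g x" using H by (rule bspec[rotated])
      qed
      thus "v \<in> ?B" using v by blast
    qed
  next
    show "?B \<subseteq> ?A"
    proof
      fix v assume "v \<in> ?B"
      then obtain a b where v: "v = a * x0 + b" and H: "\<forall>x\<in>{x0 - 3 * \<delta> .. x0 + 3 * \<delta>}. a * x + b \<ge> g x"
        by blast
      from key[OF H] obtain a' b' where e: "a' * x0 + b' = a * x0 + b" and H': "\<forall>x\<in>{l..r}. a' * x + b' \<ge> g x"
        by blast
      have "v = a' * x0 + b'" using v e by simp
      thus "v \<in> ?A" using H' by blast
    qed
  qed
  then show ?thesis unfolding concave_majorant_def by simp
qed

end
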